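(* Let $k$ be a finite field with $q$ elements. Let $f=p^d\in V_n$, where $p$ is an irreducible homogeneous polynomial and $d\ge1$, so that $R(f)$ is an indecomposable regular representation. Suppose that the map $V_{n-1}\to V_n/\langle f\rangle$ given by multiplication by $y$ is not bijective. Then the quiver $|R(f)|$ has exactly one loop, and this loop is at the vertex $0$. Moreover, after removing this loop, $|R(f)|$ is a directed tree with the following properties: 1. no arrow starts at $0$; 2. at every vertex other than $0$ exactly one arrow starts; 3. at every vertex other than $0$ either exactly $q$ arrows end or none end, and at $0$ exactly $q-1$ arrows end; 4. every vertex at which no arrow ends is connected to $0$ by a unique directed path, and this path has length $d$.
   Context: A quiver is a quadruple $(\Gamma_0,\Gamma_1,s,t)$ with vertex set $\Gamma_0$, arrow set $\Gamma_1$, and start and terminus maps $s,t$. For a linear Kronecker representation $f,g\colon X_1\to X_0$, the quiver $|X|$ has vertices $X_0$, arrows $X_1$, $s=f$ and $t=g$. $V_n\subset k[x,y]$ is the space of homogeneous polynomials of degree $n$, with $V_{-1}=0$. For $0\ne f\in V_n$, $R(f)$ is the representation $V_{n-1}\rightrightarrows V_n/\langle f\rangle$ whose first map is multiplication by $x$ and whose second map is multiplication by $y$, each followed by the projection. *)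

theory Defs
  imports "HOL-Computational_Algebra.Polynomial_Factorial" "Graph_Theory.Graph_Theory"
begin

text \<open>Bivariate polynomials k[x,y] are modelled as k[x][y], i.e. the type 'a poly poly:
  the outer variable is y, the inner variable is x. So coeff (coeff P j) i is the
  coefficient of x^i y^j.\<close>

definition varX :: "'a::comm_ring_1 poly poly" where
  "varX = [:[:0, 1:]:]"

definition varY :: "'a::comm_ring_1 poly poly" where
  "varY = [:0, 1:]"

text \<open>V n: homogeneous polynomials of degree n (n an integer; V (-1) = 0).\<close>
definition hom :: "int \<Rightarrow> 'a::comm_ring_1 poly poly set" where
  "hom n = {P. \<forall>i j. coeff (coeff P j) i \<noteq> 0 \<longrightarrow> int (i + j) = n}"

text \<open>The class of g in V_n / <f>, where <f> is the k-linear span of f.\<close>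
definition cls :: "'a::comm_ring_1 poly poly \<Rightarrow> 'a poly poly \<Rightarrow> 'a poly poly set" where
  "cls f g = {g + [:[:c:]:] * f | c. True}"

text \<open>The quiver |R(f)| of the Kronecker representation
  R(f): V_{n-1} \<rightrightarrows> V_n/<f> (first map: multiplication by x, second: by y).\<close>
definition quiverR :: "int \<Rightarrow> 'a::comm_ring_1 poly poly \<Rightarrow> ('a poly poly set, 'a poly poly) pre_digraph" where
  "quiverR n f = \<lparr> verts = cls f ` hom n, arcs = hom (n - 1),
                   tail = (\<lambda>g. cls f (varX * g)), head = (\<lambda>g. cls f (varY * g)) \<rparr>"

text \<open>Undirected walks in a quiver: each step uses an arrow either forwards (True)
  or backwards (False).\<close>
fun ucas :: "('v,'e) pre_digraph \<Rightarrow> 'v \<Rightarrow> ('e \<times> bool) list \<Rightarrow> 'v \<Rightarrow> bool" where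
  "ucas G u [] v = (u = v)"
| "ucas G u ((e, b) # es) v =
     ((if b then tail G e else head G e) = u \<and> ucas G (if b then head G e else tail G e) es v)"

text \<open>Underlying undirected multigraph has no cycle: no nonempty closed walk using
  pairwise distinct arrows (loops and parallel arrows count as cycles).\<close>
definition uacyclic :: "('v,'e) pre_digraph \<Rightarrow> bool" where
  "uacyclic G \<longleftrightarrow> \<not> (\<exists>u es. u \<in> verts G \<and> es \<noteq> [] \<and> fst ` set es \<subseteq> arcs G
                       \<and> distinct (map fst es) \<and> ucas G u es u)"

definition directed_tree :: "('v,'e) pre_digraph \<Rightarrow> bool" where
  "directed_tree G \<longleftrightarrow> connected G \<and> uacyclic G"

end

theory Submission
  imports Defs
begin


lemma ucas_append: "ucas G u (xs @ ys) v \<longleftrightarrow> (\<exists>w. ucas G u xs w \<and> ucas G w ys v)"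
  by (induction xs arbitrary: u) (auto, blast+)

locale rtree =
  fixes H :: "('v,'e) pre_digraph" and z :: 'v and r :: "'v \<Rightarrow> nat"
  assumes ends: "\<And>e. e \<in> arcs H \<Longrightarrow> tail H e \<in> verts H \<and> head H e \<in> verts H"
  and zV: "z \<in> verts H"
  and out: "\<And>v. v \<in> verts H \<Longrightarrow> v \<noteq> z \<Longrightarrow> \<exists>e\<in>arcs H. tail H e = v"
  and outu: "\<And>e e'. e \<in> arcs H \<Longrightarrow> e' \<in> arcs H \<Longrightarrow> tail H e = tail H e' \<Longrightarrow> e = e'"
  and rk: "\<And>e. e \<in> arcs H \<Longrightarrow> r (tail H e) = Suc (r (head H e))"
  and rz: "r z = 0"
begin

lemma noout: "e \<in> arcs H \<Longrightarrow> tail H e \<noteq> z"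
  using rk[of e] rz by auto

lemma cas_rank: "pre_digraph.cas H v P w \<Longrightarrow> set P \<subseteq> arcs H \<Longrightarrow> r v = length P + r w"
  by (induction P arbitrary: v) (auto simp: pre_digraph.cas.simps rk)

lemma cas_verts: "pre_digraph.cas H v P w \<Longrightarrow> set P \<subseteq> arcs H \<Longrightarrow>
   distinct (pre_digraph.awalk_verts H v P) \<and> (\<forall>u\<in>set (pre_digraph.awalk_verts H v P). r u \<le> r v)"
proof (induction P arbitrary: v)
  case Nil thus ?case by (simp add: pre_digraph.awalk_verts.simps)
next
  case (Cons e P)
  hence t: "tail H e = v" and c: "pre_digraph.cas H (head H e) P w" and e: "e \<in> arcs H"
    by (auto simp: pre_digraph.cas.simps)
  from Cons.IH[OF c] Cons.prems have ih: "distinct (pre_digraph.awalk_verts H (head H e) P)"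
    "\<forall>u\<in>set (pre_digraph.awalk_verts H (head H e) P). r u \<le> r (head H e)" by auto
  have "r (head H e) < r v" using rk[OF e] t by simp
  thus ?case using ih t by (force simp: pre_digraph.awalk_verts.simps)
qed

lemma walk_unique: "pre_digraph.awalk H v P z \<Longrightarrow> pre_digraph.awalk H v P' z \<Longrightarrow> P = P'"
proof (induction P arbitrary: v P')
  case Nil
  then show ?case
    by (cases P') (auto simp: pre_digraph.awalk_def pre_digraph.cas.simps dest: noout)
next
  case (Cons e P)
  then show ?case
  proof (cases P')
    case Nil
    then show ?thesis using Cons.prems
      by (auto simp: pre_digraph.awalk_def pre_digraph.cas.simps dest: noout)
  next
    case (Cons e' P'')
    with Cons.prems have "e = e'" using outu
      by (auto simp: pre_digraph.awalk_def pre_digraph.cas.simps)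
    moreover have "P = P''" using Cons.prems \<open>P' = _\<close> \<open>e = e'\<close> ends
      by (intro Cons.IH[of "head H e"]) (auto simp: pre_digraph.awalk_def pre_digraph.cas.simps)
    ultimately show ?thesis using \<open>P' = _\<close> by simp
  qed
qed

lemma walk_exists: "v \<in> verts H \<Longrightarrow> \<exists>P. pre_digraph.awalk H v P z"
proof (induction "r v" arbitrary: v rule: less_induct)
  case less
  show ?case
  proof (cases "v = z")
    case True then show ?thesis using less.prems
      by (intro exI[of _ "[]"]) (auto simp: pre_digraph.awalk_def pre_digraph.cas.simps)
  next
    case False
    then obtain e where e: "e \<in> arcs H" "tail H e = v" using out less.prems by blast
    have "r (head H e) < r v" using rk[OF e(1)] e(2) by simp
    then obtain P where "pre_digraph.awalk H (head H e) P z" using less.hyps ends e by blast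
    then show ?thesis using e less.prems
      by (intro exI[of _ "e # P"]) (auto simp: pre_digraph.awalk_def pre_digraph.cas.simps)
  qed
qed

lemma paths: "v \<in> verts H \<Longrightarrow> \<exists>P. pre_digraph.apath H v P z \<and> length P = r v
    \<and> (\<forall>P'. pre_digraph.apath H v P' z \<longrightarrow> P' = P)"
proof -
  assume v: "v \<in> verts H"
  then obtain P where P: "pre_digraph.awalk H v P z" using walk_exists by blast
  hence "pre_digraph.apath H v P z" using cas_verts
    by (auto simp: pre_digraph.apath_def pre_digraph.awalk_def)
  moreover have "length P = r v" using cas_rank P rz by (auto simp: pre_digraph.awalk_def)
  ultimately show ?thesis using walk_unique P
    by (metis pre_digraph.apath_def)
qed

lemma reach_z: "v \<in> verts H \<Longrightarrow>
   (v, z) \<in> rtrancl_on (verts H) (parcs (mk_symmetric H)) \<and> (z, v) \<in> rtrancl_on (verts H) (parcs (mk_symmetric H))"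
proof (induction "r v" arbitrary: v rule: less_induct)
  case less
  show ?case
  proof (cases "v = z")
    case True then show ?thesis using less.prems by auto
  next
    case False
    then obtain e where e: "e \<in> arcs H" "tail H e = v" using out less.prems by blast
    have "r (head H e) < r v" using rk[OF e(1)] e(2) by simp
    then have ih: "(head H e, z) \<in> rtrancl_on (verts H) (parcs (mk_symmetric H))"
      "(z, head H e) \<in> rtrancl_on (verts H) (parcs (mk_symmetric H))" using less.hyps ends e by blast+
    have a: "(v, head H e) \<in> parcs (mk_symmetric H)" "(head H e, v) \<in> parcs (mk_symmetric H)"
      using e by (auto simp: mk_symmetric_def)
    show ?thesis
      using converse_rtrancl_on_into_rtrancl_on[OF a(1) ih(1)] rtrancl_on_into_rtrancl_on[OF ih(2) a(2)]
        less.prems by auto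
  qed
qed

lemma conn: "connected H"
  unfolding connected_def strongly_connected_def reachable_def
proof (intro conjI ballI)
  show "verts (with_proj (mk_symmetric H)) \<noteq> {}" using zV by (auto simp: mk_symmetric_def)
  fix u v assume "u \<in> verts (with_proj (mk_symmetric H))" "v \<in> verts (with_proj (mk_symmetric H))"
  hence "u \<in> verts H" "v \<in> verts H" by (auto simp: mk_symmetric_def)
  then show "(u, v) \<in> rtrancl_on (verts (with_proj (mk_symmetric H))) (arcs_ends (with_proj (mk_symmetric H)))"
    using rtrancl_on_trans[OF conjunct1[OF reach_z[of u]] conjunct2[OF reach_z[of v]]]
    by (simp add: mk_symmetric_def)
qed

lemma ucas_end: "ucas H u es v \<Longrightarrow> es \<noteq> [] \<Longrightarrow>
   (case last es of (e, b) \<Rightarrow> (if b then head H e else tail H e) = v)"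
  by (induction es arbitrary: u) (auto split: if_splits)

lemma acyc: "uacyclic H"
  unfolding uacyclic_def
proof
  assume "\<exists>u es. u \<in> verts H \<and> es \<noteq> [] \<and> fst ` set es \<subseteq> arcs H
                       \<and> distinct (map fst es) \<and> ucas H u es u"
  then obtain u es where es: "es \<noteq> []" "fst ` set es \<subseteq> arcs H" "distinct (map fst es)" "ucas H u es u"
    by blast
  define R where "R = Max ((\<lambda>x. r (tail H (fst x))) ` set es)"
  have fin: "finite ((\<lambda>x. r (tail H (fst x))) ` set es)" by simp
  have "R \<in> (\<lambda>x. r (tail H (fst x))) ` set es" unfolding R_def using es(1) by (intro Max_in fin) auto
  then obtain e b where eb: "(e, b) \<in> set es" "r (tail H e) = R" by auto
  have maxR: "\<And>x. x \<in> set es \<Longrightarrow> r (tail H (fst x)) \<le> R" unfolding R_def using fin by auto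
  obtain es1 es2 where sp: "es = es1 @ (e, b) # es2" using split_list[OF eb(1)] by blast
  from es(4) sp obtain w where w1: "ucas H u es1 w" and w2: "ucas H w ((e, b) # es2) u"
    using ucas_append by metis
  have rot: "ucas H w ((e, b) # es2 @ es1) w" using w1 w2 ucas_append[of H w "(e, b) # es2" es1 w] by auto
  have dist: "distinct (map fst ((e, b) # es2 @ es1))" using es(3) sp by auto
  have sub: "set ((e, b) # es2 @ es1) = set es" using sp by auto
  let ?rest = "es2 @ es1"
  have eA: "e \<in> arcs H" using eb(1) es(2) by auto
  have bad: "False" if e': "e' \<in> fst ` set ?rest" and t: "tail H e' = tail H e \<or> head H e' = tail H e" for e'
  proof -
    have e'A: "e' \<in> arcs H" using e' sub es(2) by auto
    have "e' \<noteq> e" using dist e' by auto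
    moreover have "tail H e' \<noteq> tail H e" using outu[OF e'A eA] \<open>e' \<noteq> e\<close> by auto
    ultimately have "head H e' = tail H e" using t by auto
    hence "r (tail H e') = Suc R" using rk[OF e'A] eb(2) by simp
    moreover obtain x where "x \<in> set es" "fst x = e'" using e' sub by auto
    ultimately show False using maxR by fastforce
  qed
  have rne: "?rest \<noteq> []"
  proof
    assume "?rest = []"
    hence "ucas H w [(e, b)] w" using rot by simp
    hence "tail H e = head H e" by (auto split: if_splits)
    thus False using rk[OF eA] by simp
  qed
  show False
  proof (cases b)
    case True
    hence "ucas H (head H e) ?rest (tail H e)" using rot by auto
    from ucas_end[OF this rne] obtain e' b' where "last ?rest = (e', b')"
       "(if b' then head H e' else tail H e') = tail H e" by (cases "last ?rest") auto
    moreover have "last ?rest \<in> set ?rest" using rne by (rule last_in_set)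
    ultimately show False using bad[of e'] by (force split: if_splits)
  next
    case False
    hence "ucas H (tail H e) ?rest w" using rot by auto
    then obtain e' b' rs where "?rest = (e', b') # rs" "(if b' then tail H e' else head H e') = tail H e"
      using rne by (cases ?rest) auto
    then show False using bad[of e'] by (force split: if_splits)
  qed
qed

lemma dtree: "directed_tree H"
  using conn acyc by (simp add: directed_tree_def)

end


definition cf :: "'a::comm_ring_1 poly poly \<Rightarrow> nat \<Rightarrow> nat \<Rightarrow> 'a" where
  "cf P i j = coeff (coeff P j) i"

lemma cf_add[simp]: "cf (P + Q) i j = cf P i j + cf Q i j" by (simp add: cf_def)
lemma cf_diff[simp]: "cf (P - Q) i j = cf P i j - cf Q i j" by (simp add: cf_def)
lemma cf_0[simp]: "cf 0 i j = 0" by (simp add: cf_def)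
lemma cf_const[simp]: "cf ([:[:k:]:] * P) i j = k * cf P i j" by (simp add: cf_def)
lemma cf_smult[simp]: "cf (smult [:k:] P) i j = k * cf P i j" by (simp add: cf_def)
lemma cf_X: "cf (varX * P) i j = (if i = 0 then 0 else cf P (i - 1) j)"
  by (cases i) (simp_all add: cf_def varX_def)
lemma cf_Y: "cf (varY * P) i j = (if j = 0 then 0 else cf P i (j - 1))"
  by (cases j) (simp_all add: cf_def varY_def)
lemma cf_Ypow: "cf (varY ^ d :: 'a::comm_ring_1 poly poly) i j = (if i = 0 \<and> j = d then 1 else 0)"
proof (induction d arbitrary: j)
  case 0 then show ?case by (cases j) (auto simp: cf_def)
next
  case (Suc d) then show ?case by (auto simp: cf_Y)
qed
lemma poly_eq_cf: "P = Q \<longleftrightarrow> (\<forall>i j. cf P i j = cf Q i j)"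
  by (auto simp: cf_def poly_eq_iff)

definition mk :: "nat \<Rightarrow> (nat \<Rightarrow> nat \<Rightarrow> 'a::comm_ring_1) \<Rightarrow> 'a poly poly" where
  "mk N F = (\<Sum>j\<le>N. monom (\<Sum>i\<le>N. monom (F i j) i) j)"

lemma cf_mk: "cf (mk N F) i j = (if i \<le> N \<and> j \<le> N then F i j else 0)"
  by (simp add: mk_def cf_def coeff_sum coeff_monom)

lemma hom_cf: "P \<in> hom n \<longleftrightarrow> (\<forall>i j. cf P i j \<noteq> 0 \<longrightarrow> int (i + j) = n)"
  by (simp add: hom_def cf_def)

lemma hom_add: "P \<in> hom n \<Longrightarrow> Q \<in> hom n \<Longrightarrow> P + Q \<in> hom n"
  by (auto simp: hom_cf) (metis add.right_neutral add_0)
lemma hom_diff: "P \<in> hom n \<Longrightarrow> Q \<in> hom n \<Longrightarrow> P - Q \<in> hom n"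
  by (auto simp: hom_cf) (metis diff_zero diff_self right_minus_eq)
lemma hom_const: "P \<in> hom n \<Longrightarrow> [:[:k:]:] * P \<in> hom n"
  by (auto simp: hom_cf) (metis mult_zero_right)
lemma hom_0: "0 \<in> hom n" by (simp add: hom_cf)
lemma hom_X: "P \<in> hom (n - 1) \<Longrightarrow> varX * P \<in> hom n"
  unfolding hom_cf cf_X
proof (intro allI impI)
  fix i j assume h: "\<forall>i j. cf P i j \<noteq> 0 \<longrightarrow> int (i + j) = n - 1"
    and c: "(if i = 0 then 0 else cf P (i - 1) j) \<noteq> 0"
  hence "i > 0" "cf P (i - 1) j \<noteq> 0" by (auto split: if_splits)
  with h have "int (i - 1 + j) = n - 1" by blast
  with \<open>i > 0\<close> show "int (i + j) = n" by linarith
qed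
lemma hom_Y: "P \<in> hom (n - 1) \<Longrightarrow> varY * P \<in> hom n"
  unfolding hom_cf cf_Y
proof (intro allI impI)
  fix i j assume h: "\<forall>i j. cf P i j \<noteq> 0 \<longrightarrow> int (i + j) = n - 1"
    and c: "(if j = 0 then 0 else cf P i (j - 1)) \<noteq> 0"
  hence "j > 0" "cf P i (j - 1) \<noteq> 0" by (auto split: if_splits)
  with h have "int (i + (j - 1)) = n - 1" by blast
  with \<open>j > 0\<close> show "int (i + j) = n" by linarith
qed
lemma hom_Ypow: "varY ^ d \<in> hom (int d)"
  by (auto simp: hom_cf cf_Ypow split: if_splits)

lemma cls_eq: "cls f a = cls f b \<longleftrightarrow> (\<exists>k. a = b + [:[:k:]:] * f)"
proof
  assume "cls f a = cls f b"
  moreover have "a \<in> cls f a" unfolding cls_def by (auto intro: exI[of _ 0])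
  ultimately show "\<exists>k. a = b + [:[:k:]:] * f" by (auto simp: cls_def)
next
  assume "\<exists>k. a = b + [:[:k:]:] * f"
  then obtain k where k: "a = b + [:[:k:]:] * f" by blast
  have e: "smult [:c:] f + smult [:k:] f = smult [:c + k:] f" for c
  proof -
    have ck: "[:c:] + [:k:] = [:c + k:]" by simp
    show ?thesis by (metis ck smult_add_left)
  qed
  show "cls f a = cls f b" unfolding cls_def k
  proof safe
    fix c show "\<exists>c'. b + [:[:k:]:] * f + [:[:c:]:] * f = b + [:[:c':]:] * f \<and> True"
      by (rule exI[of _ "k + c"]) (simp add: add.assoc e add.commute)
  next
    fix c show "\<exists>c'. b + [:[:c:]:] * f = b + [:[:k:]:] * f + [:[:c':]:] * f \<and> True"
      using e[of "c - k"] by (intro exI[of _ "c - k"]) (simp add: add.assoc add.commute)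
  qed
qed



lemma dvdY: "varY dvd (P::'a::comm_ring_1 poly poly) \<longleftrightarrow> coeff P 0 = 0"
  using poly_eq_0_iff_dvd[of P 0] by (simp add: poly_0_coeff_0 varY_def)

lemma varY_nz: "(varY :: 'a::comm_ring_1 poly poly) \<noteq> 0" by (simp add: varY_def)

lemma prime_varY: "prime_elem (varY :: 'a::idom poly poly)"
proof (rule prime_elemI)
  show "varY \<noteq> (0 :: 'a poly poly)" by (rule varY_nz)
  show "\<not> varY dvd (1 :: 'a poly poly)"
    by (auto simp: is_unit_poly_iff varY_def)
  fix a b :: "'a poly poly" assume "varY dvd a * b"
  then show "varY dvd a \<or> varY dvd b" by (simp add: dvdY coeff_mult_0)
qed

lemma const_pow: "[:[:c:]:] ^ d = ([:[:c ^ d:]:] :: 'a::comm_ring_1 poly poly)"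
proof (induction d)
  case 0 have "[:1:] = (1::'a poly)" by (simp add: one_pCons)
  then show ?case by (simp add: one_pCons)
qed auto

lemma const_mult: "[:[:a:]:] * ([:[:b:]:] * P) = [:[:a * b:]:] * (P :: 'a::comm_ring_1 poly poly)"
proof -
  have "[:[:a:]:] * [:[:b:]:] = ([:[:a * b:]:] :: 'a poly poly)" by simp
  thus ?thesis by (metis mult.assoc)
qed

lemma cls_scale: "(C::'a::field) \<noteq> 0 \<Longrightarrow> cls ([:[:C:]:] * F) g = cls F g"
  unfolding cls_def
proof safe
  fix k assume "C \<noteq> 0"
  show "\<exists>c. g + [:[:k:]:] * ([:[:C:]:] * F) = g + [:[:c:]:] * F \<and> True"
    by (rule exI[of _ "k * C"]) (simp only: const_mult)
next
  fix k assume "C \<noteq> 0"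
  have "[:[:k / C:]:] * ([:[:C:]:] * F) = [:[:k:]:] * F" using \<open>C \<noteq> 0\<close> by (simp only: const_mult) simp
  then show "\<exists>c. g + [:[:k:]:] * F = g + [:[:c:]:] * ([:[:C:]:] * F) \<and> True"
    by (intro exI[of _ "k / C"]) simp
qed

lemma smult_neg_const[simp]: "smult [:- c:] (f::'a::comm_ring_1 poly poly) = - smult [:c:] f"
proof -
  have "[:- c:] = - [:c:]" by simp
  thus ?thesis by (simp only: smult_minus_left)
qed

lemma reduce:
  fixes p f :: "'a::field poly poly"
  assumes irr: "irreducible p" and d: "d \<ge> 1" and fp: "f = p ^ d" and fh: "f \<in> hom n"
    and nb: "\<not> bij_betw (head (quiverR n f)) (arcs (quiverR n f)) (verts (quiverR n f))"
  shows "n = int d \<and> (\<exists>C. C \<noteq> 0 \<and> f = [:[:C:]:] * varY ^ d)"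
proof -
  have yf: "varY dvd f"
  proof (rule ccontr)
    assume ny: "\<not> varY dvd f"
    have inj: "inj_on (\<lambda>g. cls f (varY * g)) (hom (n - 1))"
    proof (rule inj_onI)
      fix g1 g2 :: "'a poly poly" assume "g1 \<in> hom (n - 1)" "g2 \<in> hom (n - 1)" "cls f (varY * g1) = cls f (varY * g2)"
      then obtain k where k: "varY * g1 = varY * g2 + [:[:k:]:] * f" by (auto simp: cls_eq)
      have "k = 0"
      proof (rule ccontr)
        assume "k \<noteq> 0"
        have "[:[:k:]:] * f = varY * (g1 - g2)" using k by (simp add: algebra_simps)
        hence "[:[:1/k:]:] * ([:[:k:]:] * f) = varY * ([:[:1/k:]:] * (g1 - g2))" by (metis mult.left_commute)
        moreover have "[:[:1/k:]:] * ([:[:k:]:] * f) = f" using \<open>k \<noteq> 0\<close> by (simp only: const_mult) (simp add: one_pCons[symmetric])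
        ultimately have "varY dvd f" by (metis dvd_triv_left)
        with ny show False by simp
      qed
      with k have "varY * (g1 - g2) = 0" by (simp add: algebra_simps)
      thus "g1 = g2" using varY_nz[where ?'a='a] by auto
    qed
    have img: "(\<lambda>g. cls f (varY * g)) ` hom (n - 1) = cls f ` hom n"
    proof safe
      fix g :: "'a poly poly" assume "g \<in> hom (n - 1)" thus "cls f (varY * g) \<in> cls f ` hom n" using hom_Y by blast
    next
      fix h :: "'a poly poly" assume hh: "h \<in> hom n"
      have "coeff f 0 \<noteq> 0" using ny dvdY by blast
      then obtain i where fi: "cf f i 0 \<noteq> 0" by (auto simp: cf_def poly_eq_iff)
      define c where "c = cf h i 0 / cf f i 0"
      define h' where "h' = h - [:[:c:]:] * f"
      have h'h: "h' \<in> hom n" unfolding h'_def by (intro hom_diff hh hom_const fh)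
      have "cf h' i' 0 = 0" for i'
      proof (cases "i' = i")
        case True thus ?thesis using fi by (simp add: h'_def c_def)
      next
        case False
        have "cf f i' 0 = 0" using fh fi False unfolding hom_cf by (metis add.right_neutral of_nat_eq_iff)
        moreover have "cf h i' 0 = 0" using fh hh fi False unfolding hom_cf by (metis add.right_neutral of_nat_eq_iff)
        ultimately show ?thesis by (simp add: h'_def)
      qed
      hence "coeff h' 0 = 0" by (auto simp: cf_def poly_eq_iff)
      then obtain g where g: "h' = varY * g" using dvdY by (metis dvdE)
      have gh: "g \<in> hom (n - 1)" unfolding hom_cf
      proof (intro allI impI)
        fix i j assume "cf g i j \<noteq> 0"
        hence "cf h' i (Suc j) \<noteq> 0" by (simp add: g cf_Y)
        hence "int (i + Suc j) = n" using h'h unfolding hom_cf by blast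
        thus "int (i + j) = n - 1" by simp
      qed
      have "cls f (varY * g) = cls f h" unfolding cls_eq
        by (rule exI[of _ "- c"]) (simp add: g[symmetric] h'_def)
      thus "cls f h \<in> (\<lambda>g. cls f (varY * g)) ` hom (n - 1)" using gh by (metis image_eqI)
    qed
    have "bij_betw (head (quiverR n f)) (arcs (quiverR n f)) (verts (quiverR n f))"
      using inj img by (simp add: quiverR_def bij_betw_def)
    with nb show False by simp
  qed
  have "varY dvd p" using prime_elem_dvd_power[OF prime_varY] yf fp by blast
  then obtain u where pu: "p = varY * u" by (rule dvdE)
  have "\<not> is_unit (varY :: 'a poly poly)" by (auto simp: is_unit_poly_iff varY_def)
  hence "is_unit u" using irreducibleD[OF irr pu] by blast
  then obtain u0 where u0: "u = [:u0:]" "is_unit u0" by (auto simp: is_unit_poly_iff)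
  then obtain c where c0: "u0 = [:c:]" "c dvd 1" by (auto simp: is_unit_poly_iff)
  hence c: "u0 = [:c:]" "c \<noteq> 0" by auto
  have fC: "f = [:[:c ^ d:]:] * varY ^ d"
  proof -
    have "p = [:[:c:]:] * varY" using pu u0 c by (simp only: mult.commute)
    hence "f = [:[:c:]:] ^ d * varY ^ d" using fp by (simp only: power_mult_distrib)
    thus ?thesis by (simp only: const_pow)
  qed
  have "cf f 0 d = c ^ d" by (simp add: fC cf_Ypow) 
  hence "cf f 0 d \<noteq> 0" using c by simp
  hence "int (0 + d) = n" using fh unfolding hom_cf by blast
  hence "n = int d" by simp
  moreover have "c ^ d \<noteq> 0" using c by simp
  ultimately show ?thesis using fC by blast
qed



lemma cf_F: "cf (varY ^ d :: 'a::comm_ring_1 poly poly) i j = (if i = 0 \<and> j = d then 1 else 0)"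
  by (rule cf_Ypow)

locale conc =
  fixes F :: "'a::{field,finite} poly poly" and d :: nat
  assumes Fd: "F = varY ^ d" and d1: "d \<ge> 1"
begin

abbreviation "G \<equiv> quiverR (int d) F"
abbreviation "z \<equiv> cls F 0"

definition ordv :: "'a poly poly set \<Rightarrow> nat" where
  "ordv v = (LEAST j. d \<le> j \<or> (\<forall>h\<in>v. cf h (d - j) j \<noteq> 0))"
definition rv :: "'a poly poly set \<Rightarrow> nat" where
  "rv v = d - ordv v"

lemma cfF: "cf F i j = (if i = 0 \<and> j = d then 1 else 0)"
  unfolding Fd by (rule cf_Ypow)

lemma G_simps[simp]: "verts G = cls F ` hom (int d)" "arcs G = hom (int d - 1)"
  "tail G = (\<lambda>g. cls F (varX * g))" "head G = (\<lambda>g. cls F (varY * g))"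
  by (simp_all add: quiverR_def)

lemma cls_inv: "h' \<in> cls F h \<Longrightarrow> j \<noteq> d \<Longrightarrow> cf h' i j = cf h i j"
  by (auto simp: cls_def cfF)

lemma self_cls: "h \<in> cls F h"
  unfolding cls_def by (auto intro: exI[of _ 0])

lemma ordv_cls: "ordv (cls F h) = (LEAST j. d \<le> j \<or> cf h (d - j) j \<noteq> 0)"
proof -
  have "(d \<le> j \<or> (\<forall>h'\<in>cls F h. cf h' (d - j) j \<noteq> 0)) = (d \<le> j \<or> cf h (d - j) j \<noteq> 0)" for j
  proof (cases "d \<le> j")
    case False
    hence "j \<noteq> d" by simp
    have "(\<forall>h'\<in>cls F h. cf h' (d - j) j \<noteq> 0) = (cf h (d - j) j \<noteq> 0)"
    proof
      assume "\<forall>h'\<in>cls F h. cf h' (d - j) j \<noteq> 0" thus "cf h (d - j) j \<noteq> 0" using self_cls[of h] by blast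
    next
      assume "cf h (d - j) j \<noteq> 0" thus "\<forall>h'\<in>cls F h. cf h' (d - j) j \<noteq> 0"
        using cls_inv[OF _ \<open>j \<noteq> d\<close>, of _ h "d - j"] by metis
    qed
    thus ?thesis using False by simp
  qed simp
  thus ?thesis unfolding ordv_def by simp
qed

lemma rz: "rv z = 0"
proof -
  have "(LEAST j. d \<le> j) = d" by (rule Least_equality) auto
  thus ?thesis unfolding rv_def ordv_cls by simp
qed

lemma varX_nz: "(varX :: 'a poly poly) \<noteq> 0" by (simp add: varX_def)

lemma outu: "e1 \<in> hom (int d - 1) \<Longrightarrow> e2 \<in> hom (int d - 1) \<Longrightarrow>
   cls F (varX * e1) = cls F (varX * e2) \<Longrightarrow> e1 = e2"
proof -
  assume "cls F (varX * e1) = cls F (varX * e2)"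
  then obtain k where k: "varX * e1 = varX * e2 + [:[:k:]:] * F" by (auto simp: cls_eq)
  have "cf (varX * e1) 0 d = cf (varX * e2 + [:[:k:]:] * F) 0 d" using k by simp
  hence "k = 0" by (simp add: cf_X cfF)
  with k have "varX * e1 = varX * e2" by simp
  thus "e1 = e2" using varX_nz mult_cancel_left by blast
qed

lemma hd_nat: "h \<in> hom (int d) \<Longrightarrow> cf h i j \<noteq> 0 \<Longrightarrow> i + j = d"
  unfolding hom_cf by (metis of_nat_eq_iff)
lemma hdm1_nat: "h \<in> hom (int d - 1) \<Longrightarrow> cf h i j \<noteq> 0 \<Longrightarrow> Suc (i + j) = d"
  unfolding hom_cf by (metis add.commute of_nat_Suc of_nat_eq_iff diff_add_cancel)

lemma loop: "{a \<in> hom (int d - 1). cls F (varX * a) = cls F (varY * a)} = {0}"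
proof (intro equalityI subsetI)
  fix a assume "a \<in> {0::'a poly poly}" thus "a \<in> {a \<in> hom (int d - 1). cls F (varX * a) = cls F (varY * a)}"
    using hom_0 by auto
next
  fix a assume "a \<in> {a \<in> hom (int d - 1). cls F (varX * a) = cls F (varY * a)}"
  hence "a \<in> hom (int d - 1)" "cls F (varX * a) = cls F (varY * a)" by auto
  then obtain k where k: "varX * a = varY * a + [:[:k:]:] * F" by (auto simp: cls_eq)
  have eq: "cf (varX * a) i j = cf (varY * a + [:[:k:]:] * F) i j" for i j using k by simp
  have "\<forall>i. cf a i j = 0" for j
  proof (induction j)
    case 0
    show ?case using eq[of "Suc _" 0] d1 by (simp add: cf_X cf_Y cfF)
  next
    case (Suc j)
    show ?case using eq[of "Suc _" "Suc j"] Suc by (simp add: cf_X cf_Y cfF)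
  qed
  thus "a \<in> {0}" by (simp add: poly_eq_cf)
qed


lemma ends: "e \<in> hom (int d - 1) \<Longrightarrow> cls F (varX * e) \<in> verts G \<and> cls F (varY * e) \<in> verts G"
  using hom_X[of e "int d"] hom_Y[of e "int d"] by simp

lemma zV: "z \<in> verts G" using imageI[OF hom_0[of "int d"], of "cls F"] by simp

lemma out_ex: "h \<in> hom (int d) \<Longrightarrow> cls F h \<noteq> z \<Longrightarrow>
   \<exists>e \<in> hom (int d - 1). e \<noteq> 0 \<and> cls F (varX * e) = cls F h"
proof -
  assume hh: "h \<in> hom (int d)" and nz: "cls F h \<noteq> z"
  define e where "e = mk d (\<lambda>i j. cf h (Suc i) j)"
  define c where "c = cf h 0 d"
  have xe: "varX * e = h + [:[:- c:]:] * F"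
    unfolding poly_eq_cf
  proof (intro allI)
    fix i j
    show "cf (varX * e) i j = cf (h + [:[:- c:]:] * F) i j"
    proof (cases "i = 0")
      case True
      then show ?thesis using hd_nat[OF hh, of 0 j]
        by (cases "j = d") (auto simp: cf_X cfF c_def)
    next
      case False
      then obtain i' where i': "i = Suc i'" by (cases i) auto
      show ?thesis using hd_nat[OF hh, of i j] i'
        by (auto simp: cf_X cfF e_def cf_mk) blast+
    qed
  qed
  have eh: "e \<in> hom (int d - 1)" unfolding hom_cf
  proof (intro allI impI)
    fix i j assume "cf e i j \<noteq> 0"
    hence "cf h (Suc i) j \<noteq> 0" by (auto simp: e_def cf_mk split: if_splits)
    hence "Suc i + j = d" using hd_nat[OF hh] by blast
    thus "int (i + j) = int d - 1" by auto
  qed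
  have cx: "cls F (varX * e) = cls F h" unfolding cls_eq using xe by blast
  have "e \<noteq> 0"
  proof
    assume "e = 0"
    hence "h = 0 + [:[:c:]:] * F" using xe by (simp add: eq_neg_iff_add_eq_0)
    hence "cls F h = z" unfolding cls_eq by blast
    with nz show False by simp
  qed
  with eh cx show ?thesis by blast
qed

lemma rank_arc: "e \<in> hom (int d - 1) \<Longrightarrow> e \<noteq> 0 \<Longrightarrow>
   rv (cls F (varX * e)) = Suc (rv (cls F (varY * e)))"
proof -
  assume eh: "e \<in> hom (int d - 1)" and enz: "e \<noteq> 0"
  define Q where "Q = (\<lambda>j. d \<le> j \<or> cf e (d - 1 - j) j \<noteq> 0)"
  define m where "m = Least Q"
  have 1: "(\<lambda>j. d \<le> j \<or> cf (varX * e) (d - j) j \<noteq> 0) = Q"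
  proof
    fix j show "(d \<le> j \<or> cf (varX * e) (d - j) j \<noteq> 0) = Q j"
      by (cases "d \<le> j") (auto simp: Q_def cf_X diff_commute)
  qed
  obtain i j where ij: "cf e i j \<noteq> 0" using enz by (auto simp: poly_eq_cf)
  have "Suc (i + j) = d" using hdm1_nat[OF eh ij] .
  hence "Q j" "j < d" using ij by (auto simp: Q_def)
  hence md: "m < d" unfolding m_def by (meson Least_le le_less_trans)
  have Qm: "Q m" unfolding m_def using \<open>Q j\<close> by (rule LeastI)
  have 2: "(LEAST j. d \<le> j \<or> cf (varY * e) (d - j) j \<noteq> 0) = Suc m"
  proof (rule Least_equality)
    show "d \<le> Suc m \<or> cf (varY * e) (d - Suc m) (Suc m) \<noteq> 0"
      using Qm md by (auto simp: Q_def cf_Y)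
  next
    fix y assume y: "d \<le> y \<or> cf (varY * e) (d - y) y \<noteq> 0"
    show "Suc m \<le> y"
    proof (cases "d \<le> y")
      case True thus ?thesis using md by simp
    next
      case False
      hence "y \<noteq> 0" "cf e (d - y) (y - 1) \<noteq> 0" using y by (auto simp: cf_Y split: if_splits)
      hence "Q (y - 1)" unfolding Q_def by (metis Suc_diff_1 diff_Suc_eq_diff_pred not_gr_zero)
      hence "m \<le> y - 1" unfolding m_def by (rule Least_le)
      thus ?thesis using \<open>y \<noteq> 0\<close> by simp
    qed
  qed
  show ?thesis unfolding rv_def ordv_cls 1 2 m_def[symmetric] using md by simp
qed

lemma YF: "varY * varY ^ (d - 1) = F"
proof -
  have "Suc (d - 1) = d" using d1 by simp
  hence "varY ^ d = varY * (varY ^ (d - 1) :: 'a poly poly)" by (metis power_Suc)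
  thus ?thesis using Fd by simp
qed

lemma in_none: "h \<in> hom (int d) \<Longrightarrow> cf h d 0 \<noteq> 0 \<Longrightarrow>
   {g \<in> hom (int d - 1). cls F (varY * g) = cls F h} = {}"
proof (intro equalityI subsetI)
  fix g assume hh: "h \<in> hom (int d)" and c: "cf h d 0 \<noteq> 0"
    and g: "g \<in> {g \<in> hom (int d - 1). cls F (varY * g) = cls F h}"
  then obtain k where k: "varY * g = h + [:[:k:]:] * F" by (auto simp: cls_eq)
  have "cf (varY * g) d 0 = cf (h + [:[:k:]:] * F) d 0" using k by simp
  hence False using c d1 by (simp add: cf_Y cfF)
  thus "g \<in> {}" ..
qed simp

definition g0 :: "'a poly poly \<Rightarrow> 'a poly poly" where
  "g0 h = mk d (\<lambda>i j. cf h i (Suc j))"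

lemma g0_hom: assumes hh: "h \<in> hom (int d)" shows "g0 h \<in> hom (int d - 1)"
  unfolding hom_cf
proof (intro allI impI)
  fix i j assume "cf (g0 h) i j \<noteq> 0"
  hence "cf h i (Suc j) \<noteq> 0" by (auto simp: g0_def cf_mk split: if_splits)
  hence "i + Suc j = d" using hd_nat[OF hh] by blast
  thus "int (i + j) = int d - 1" by auto
qed

lemma g0_Y: "h \<in> hom (int d) \<Longrightarrow> cf h d 0 = 0 \<Longrightarrow> varY * g0 h = h"
  unfolding poly_eq_cf
proof (intro allI)
  fix i j assume hh: "h \<in> hom (int d)" and c: "cf h d 0 = 0"
  show "cf (varY * g0 h) i j = cf h i j"
  proof (cases "j = 0")
    case True
    then show ?thesis using hd_nat[OF hh, of i 0] c by (cases "i = d") (auto simp: cf_Y)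
  next
    case False
    then obtain j' where j': "j = Suc j'" by (cases j) auto
    show ?thesis using hd_nat[OF hh, of i j] j' by (auto simp: cf_Y g0_def cf_mk) blast+
  qed
qed

lemma Ypm_hom: "varY ^ (d - 1) \<in> hom (int d - 1)"
  using hom_Ypow[of "d - 1"] d1 by (simp add: of_nat_diff)

lemma in_some: "h \<in> hom (int d) \<Longrightarrow> cf h d 0 = 0 \<Longrightarrow>
   {g \<in> hom (int d - 1). cls F (varY * g) = cls F h} = range (\<lambda>k. g0 h + [:[:k:]:] * varY ^ (d - 1))"
proof (intro equalityI subsetI)
  fix g assume hh: "h \<in> hom (int d)" and c: "cf h d 0 = 0"
    and g: "g \<in> {g \<in> hom (int d - 1). cls F (varY * g) = cls F h}"
  then obtain k where k: "varY * g = h + [:[:k:]:] * F" by (auto simp: cls_eq)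
  also have "\<dots> = varY * (g0 h + [:[:k:]:] * varY ^ (d - 1))"
  proof -
    have "varY * (g0 h + [:[:k:]:] * varY ^ (d - 1)) = varY * g0 h + [:[:k:]:] * (varY * varY ^ (d - 1))"
      by (metis distrib_left mult.left_commute)
    thus ?thesis using g0_Y[OF hh c] YF by simp
  qed
  finally have "g = g0 h + [:[:k:]:] * varY ^ (d - 1)" using varY_nz mult_cancel_left by blast
  thus "g \<in> range (\<lambda>k. g0 h + [:[:k:]:] * varY ^ (d - 1))" by blast
next
  fix g assume hh: "h \<in> hom (int d)" and c: "cf h d 0 = 0"
    and g: "g \<in> range (\<lambda>k. g0 h + [:[:k:]:] * varY ^ (d - 1))"
  then obtain k where k: "g = g0 h + [:[:k:]:] * varY ^ (d - 1)" by blast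
  have "g \<in> hom (int d - 1)" unfolding k by (intro hom_add g0_hom hh hom_const Ypm_hom)
  moreover have "varY * g = h + [:[:k:]:] * F"
  proof -
    have "varY * (g0 h + [:[:k:]:] * varY ^ (d - 1)) = varY * g0 h + [:[:k:]:] * (varY * varY ^ (d - 1))"
      by (metis distrib_left mult.left_commute)
    thus ?thesis using g0_Y[OF hh c] YF unfolding k by simp
  qed
  hence "cls F (varY * g) = cls F h" unfolding cls_eq by blast
  ultimately show "g \<in> {g \<in> hom (int d - 1). cls F (varY * g) = cls F h}" by blast
qed

lemma in_some_inj: "inj (\<lambda>k. g0 h + [:[:k:]:] * varY ^ (d - 1))"
proof (rule injI)
  fix a b assume "g0 h + [:[:a:]:] * varY ^ (d - 1) = g0 h + [:[:b:]:] * varY ^ (d - 1)"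
  hence "cf ([:[:a:]:] * varY ^ (d - 1)) 0 (d - 1) = cf ([:[:b:]:] * (varY ^ (d - 1) :: 'a poly poly)) 0 (d - 1)"
    by simp
  thus "a = b" by (simp add: cf_Ypow)
qed

lemma in_card: "h \<in> hom (int d) \<Longrightarrow> cf h d 0 = 0 \<Longrightarrow>
   card {g \<in> hom (int d - 1). cls F (varY * g) = cls F h} = card (UNIV :: 'a set)"
proof -
  assume a: "h \<in> hom (int d)" "cf h d 0 = 0"
  show ?thesis unfolding in_some[OF a] using card_image[OF in_some_inj] by simp
qed

end


context conc begin

abbreviation "H \<equiv> pre_digraph.del_arc G 0"

lemma H_simps[simp]: "verts H = cls F ` hom (int d)" "arcs H = hom (int d - 1) - {0}"
  "tail H = (\<lambda>g. cls F (varX * g))" "head H = (\<lambda>g. cls F (varY * g))"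
  by (simp_all add: pre_digraph.del_arc_def)

lemma H_rtree: "rtree H z rv"
proof
  fix e assume "e \<in> arcs H" thus "tail H e \<in> verts H \<and> head H e \<in> verts H" using ends by simp
next
  show "z \<in> verts H" using zV by simp
next
  fix v assume "v \<in> verts H" "v \<noteq> z"
  then obtain h where h: "h \<in> hom (int d)" "v = cls F h" by auto
  then obtain e where "e \<in> hom (int d - 1)" "e \<noteq> 0" "cls F (varX * e) = v" using out_ex \<open>v \<noteq> z\<close> by blast
  thus "\<exists>e\<in>arcs H. tail H e = v" by auto
next
  fix e e' assume "e \<in> arcs H" "e' \<in> arcs H" "tail H e = tail H e'"
  thus "e = e'" using outu by simp
next
  fix e assume "e \<in> arcs H" thus "rv (tail H e) = Suc (rv (head H e))" using rank_arc by simp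
next
  show "rv z = 0" by (rule rz)
qed

lemma outdeg_z: "out_degree H z = 0"
proof -
  have "out_arcs H z = {}"
  proof (rule ccontr)
    assume "out_arcs H z \<noteq> {}"
    then obtain e where e: "e \<in> hom (int d - 1)" "e \<noteq> 0" "cls F (varX * e) = cls F (varX * 0)"
      by (auto simp: out_arcs_def)
    have "e = 0" by (rule outu[OF e(1) hom_0 e(3)])
    thus False using e(2) by simp
  qed
  thus ?thesis by (simp add: out_degree_def)
qed

lemma outdeg_v: "v \<in> verts H \<Longrightarrow> v \<noteq> z \<Longrightarrow> out_degree H v = 1"
proof -
  assume v: "v \<in> verts H" "v \<noteq> z"
  then obtain h where h: "h \<in> hom (int d)" "v = cls F h" by auto
  then obtain e where e: "e \<in> hom (int d - 1)" "e \<noteq> 0" "cls F (varX * e) = v" using out_ex \<open>v \<noteq> z\<close> by blast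
  have "out_arcs H v = {e}"
  proof (intro equalityI subsetI)
    fix e' assume "e' \<in> out_arcs H v"
    hence "e' \<in> hom (int d - 1)" "cls F (varX * e') = cls F (varX * e)" using e by (auto simp: out_arcs_def)
    thus "e' \<in> {e}" using outu e(1) by simp
  next
    fix e' assume "e' \<in> {e}" thus "e' \<in> out_arcs H v" using e by (auto simp: out_arcs_def)
  qed
  thus ?thesis by (simp add: out_degree_def)
qed

lemma q2: "card (UNIV :: 'a set) \<ge> 2"
proof -
  have "card {0, 1 :: 'a} = 2" by simp
  moreover have "card {0, 1 :: 'a} \<le> card (UNIV :: 'a set)" by (rule card_mono) auto
  ultimately show ?thesis by simp
qed

lemma inarcs_H: "in_arcs H v = {g \<in> hom (int d - 1). cls F (varY * g) = v} - {0}"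
  by (auto simp: in_arcs_def)

lemma indeg_z: "in_degree H z = card (UNIV :: 'a set) - 1"
proof -
  have S: "{g \<in> hom (int d - 1). cls F (varY * g) = cls F 0} = range (\<lambda>k. g0 0 + [:[:k:]:] * varY ^ (d - 1))"
    using in_some[OF hom_0] by simp
  have "finite {g \<in> hom (int d - 1). cls F (varY * g) = cls F 0}" unfolding S by simp
  moreover have "0 \<in> {g \<in> hom (int d - 1). cls F (varY * g) = cls F 0}" using hom_0 by simp
  moreover have "card {g \<in> hom (int d - 1). cls F (varY * g) = cls F 0} = card (UNIV :: 'a set)"
    using in_card[OF hom_0] by simp
  ultimately show ?thesis unfolding in_degree_def inarcs_H by (simp add: card_Diff_singleton)
qed

lemma indeg_v: "v \<in> verts H \<Longrightarrow> v \<noteq> z \<Longrightarrow>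
   (in_degree H v = card (UNIV :: 'a set) \<or> in_degree H v = 0) \<and> (in_degree H v = 0 \<longrightarrow> rv v = d)"
proof -
  assume v: "v \<in> verts H" "v \<noteq> z"
  then obtain h where h: "h \<in> hom (int d)" "v = cls F h" by auto
  have nz: "0 \<notin> {g \<in> hom (int d - 1). cls F (varY * g) = v}" using v by auto
  have ia: "in_arcs H v = {g \<in> hom (int d - 1). cls F (varY * g) = cls F h}"
    unfolding inarcs_H using nz h by auto
  show ?thesis
  proof (cases "cf h d 0 = 0")
    case True
    hence "in_degree H v = card (UNIV :: 'a set)" unfolding in_degree_def ia using in_card h by simp
    thus ?thesis using q2 by simp
  next
    case False
    hence "in_degree H v = 0" unfolding in_degree_def ia in_none[OF h(1) False] by simp
    moreover have "(LEAST j. d \<le> j \<or> cf h (d - j) j \<noteq> 0) = 0"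
      using False by (intro Least_equality) auto
    hence "rv v = d" unfolding rv_def h(2) ordv_cls by simp
    ultimately show ?thesis by simp
  qed
qed

end

lemma quiver_eq:
  fixes f :: "'a::field poly poly"
  assumes "C \<noteq> 0" "f = [:[:C:]:] * varY ^ d"
  shows "quiverR n f = quiverR n (varY ^ d)"
proof -
  have "cls f = cls (varY ^ d)" using cls_scale[OF assms(1)] assms(2) by (intro ext) simp
  thus ?thesis by (simp add: quiverR_def)
qed

theorem mainTheorem6:
  fixes p f :: "'a::{field,finite} poly poly" and m n :: int and d q :: nat
  assumes "card (UNIV :: 'a set) = q" and "p \<in> hom m" and "irreducible p" and "d \<ge> 1"
    and "f = p ^ d" and "f \<in> hom n"
    and "\<not> bij_betw (head (quiverR n f)) (arcs (quiverR n f)) (verts (quiverR n f))"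
  shows "\<exists>l. {a \<in> arcs (quiverR n f). tail (quiverR n f) a = head (quiverR n f) a} = {l}
           \<and> tail (quiverR n f) l = cls f 0
           \<and> (let H = pre_digraph.del_arc (quiverR n f) l; z = cls f 0 in
                directed_tree H
              \<and> out_degree H z = 0
              \<and> (\<forall>v \<in> verts H. v \<noteq> z \<longrightarrow> out_degree H v = 1)
              \<and> (\<forall>v \<in> verts H. v \<noteq> z \<longrightarrow> in_degree H v = q \<or> in_degree H v = 0)
              \<and> in_degree H z = q - 1
              \<and> (\<forall>v \<in> verts H. in_degree H v = 0 \<longrightarrow>
                   (\<exists>P. pre_digraph.apath H v P z \<and> length P = d
                        \<and> (\<forall>P'. pre_digraph.apath H v P' z \<longrightarrow> P' = P))))"
proof -
  obtain C where nd: "n = int d" and C: "C \<noteq> 0" "f = [:[:C:]:] * varY ^ d"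
    using reduce[OF assms(3,4,5,6,7)] by blast
  define F where "F = (varY ^ d :: 'a poly poly)"
  interpret conc F d using assms(4) by unfold_locales (simp_all add: F_def)
  have Q: "quiverR n f = G" unfolding nd F_def using quiver_eq[OF C] .
  have cf0: "cls f 0 = z" using cls_scale[OF C(1)] C(2) F_def by simp
  interpret R: rtree H z rv by (rule H_rtree)
  have q: "card (UNIV :: 'a set) = q" by (rule assms(1))
  show ?thesis unfolding Q cf0 Let_def
  proof (intro exI[of _ 0] conjI ballI impI)
    show "{a \<in> arcs G. tail G a = head G a} = {0}" unfolding G_simps by (rule loop)
    show "tail G 0 = z" unfolding G_simps by (simp only: mult_zero_right)
    show "directed_tree H" by (rule R.dtree)
    show "out_degree H z = 0" by (rule outdeg_z)
    fix v assume "v \<in> verts H" "v \<noteq> z"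
    thus "out_degree H v = 1" by (rule outdeg_v)
  next
    fix v assume v: "v \<in> verts H" "v \<noteq> z"
    have "in_degree H v = card (UNIV :: 'a set) \<or> in_degree H v = 0" using indeg_v[OF v] by (rule conjunct1)
    thus "in_degree H v = q \<or> in_degree H v = 0" unfolding q .
  next
    show "in_degree H z = q - 1" using indeg_z unfolding q .
  next
    fix v assume v: "v \<in> verts H" "in_degree H v = 0"
    have "in_degree H z \<noteq> 0" using indeg_z q2 by linarith
    hence "v \<noteq> z" using v(2) by metis
    hence rvd: "rv v = d" using conjunct2[OF indeg_v[OF v(1) \<open>v \<noteq> z\<close>]] v(2) by blast
    obtain P where P: "pre_digraph.apath H v P z" "length P = rv v"
      "\<forall>P'. pre_digraph.apath H v P' z \<longrightarrow> P' = P" using R.paths[OF v(1)] by blast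
    have "length P = d" using P(2) rvd by (rule trans)
    with P(1,3) show "\<exists>P. pre_digraph.apath H v P z \<and> length P = d \<and> (\<forall>P'. pre_digraph.apath H v P' z \<longrightarrow> P' = P)"
      by blast
  qed
qed


end
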